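(* Let $A$ be a finite set, $p : A \to [0,1]$, and $\gamma : \mathbb{N}^* \to (0,1]$ non-increasing; set $p_i(u) := \gamma(i)p(u)$. Let $\{X_i(u)\}_{i\ge1,u\in A}$ be independent with $X_i(u)\sim\mathrm{Bernoulli}(p_i(u))$. For $n \ge 1$ define $Z_n(u) := \mathds{1}\{X_1(u)=\dots=X_n(u)=0\}$, $R_n := \sum_{u\in A} Z_n(u)\,p_{n+1}(u)$, \[ U^\gamma_n(u) := \sum_{i=1}^n \mathds{1}\{X_i(u)=1,\ X_j(u)=0\ \forall j\in\{1,\dots,n\}\setminus\{i\}\}\,\frac{\gamma(n+1)}{\gamma(i)}, \] $\hat R_n := \frac1n\sum_{u\in A}U^\gamma_n(u)$, $\lambda := \sum_{u\in A}p(u)$ and $\lambda_m := \gamma(m)\lambda$. For $\delta\in(0,1)$ let \[ \beta_n := (1+\sqrt2)\sqrt{\frac{\lambda_{n+1}\log(4/\delta)}{n}} + \frac{1}{3n}\log\frac4\delta . \] Then with probability at least $1-\delta$, \[ -\beta_n - \frac{\lambda}{n} \le R_n - \hat R_n \le \beta_n . \]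
   Context: Influencer fatigue model: at the $i$-th selection of the influencer, node $u$ is activated with probability $\gamma(i)p(u)$, independently across nodes and selections. $R_n$ is the remaining potential for the $(n+1)$-th selection, $\hat R_n$ the reweighted Good-Turing estimator. *)

theory Defs
  imports "HOL-Probability.Probability"
begin

text \<open>Influencer fatigue model. X i u w is the indicator that node u is activated
at the i-th selection (i >= 1), in outcome w.\<close>

definition Zn :: "(nat \<Rightarrow> 'a \<Rightarrow> 'w \<Rightarrow> bool) \<Rightarrow> nat \<Rightarrow> 'a \<Rightarrow> 'w \<Rightarrow> bool" where
  "Zn X n u w = (\<forall>j\<in>{1..n}. \<not> X j u w)"

definition Rn :: "'a set \<Rightarrow> ('a \<Rightarrow> real) \<Rightarrow> (nat \<Rightarrow> real) \<Rightarrow> (nat \<Rightarrow> 'a \<Rightarrow> 'w \<Rightarrow> bool)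
    \<Rightarrow> nat \<Rightarrow> 'w \<Rightarrow> real" where
  "Rn A p \<gamma> X n w = (\<Sum>u\<in>A. (if Zn X n u w then 1 else 0) * (\<gamma> (n+1) * p u))"

definition Ugamma :: "(nat \<Rightarrow> real) \<Rightarrow> (nat \<Rightarrow> 'a \<Rightarrow> 'w \<Rightarrow> bool) \<Rightarrow> nat \<Rightarrow> 'a \<Rightarrow> 'w \<Rightarrow> real" where
  "Ugamma \<gamma> X n u w = (\<Sum>i=1..n.
      (if X i u w \<and> (\<forall>j\<in>{1..n} - {i}. \<not> X j u w) then 1 else 0) * (\<gamma> (n+1) / \<gamma> i))"

definition Rhat :: "'a set \<Rightarrow> (nat \<Rightarrow> real) \<Rightarrow> (nat \<Rightarrow> 'a \<Rightarrow> 'w \<Rightarrow> bool) \<Rightarrow> nat \<Rightarrow> 'w \<Rightarrow> real" where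
  "Rhat A \<gamma> X n w = (1 / real n) * (\<Sum>u\<in>A. Ugamma \<gamma> X n u w)"

definition lam :: "'a set \<Rightarrow> ('a \<Rightarrow> real) \<Rightarrow> real" where
  "lam A p = (\<Sum>u\<in>A. p u)"

definition beta :: "'a set \<Rightarrow> ('a \<Rightarrow> real) \<Rightarrow> (nat \<Rightarrow> real) \<Rightarrow> real \<Rightarrow> nat \<Rightarrow> real" where
  "beta A p \<gamma> \<delta> n =
     (1 + sqrt 2) * sqrt (\<gamma> (n+1) * lam A p * ln (4 / \<delta>) / real n)
     + ln (4 / \<delta>) / (3 * real n)"

end

theory Submission
  imports Defs
begin
lemma phi_sums: "(\<lambda>k. (y::real)^(k+2) / fact (k+2)) sums (exp y - 1 - y)"
proof -
  have "(\<lambda>k. y^k / fact k) sums exp y"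
    using exp_converges[of y] by (simp add: divide_inverse mult.commute)
  from sums_split_initial_segment[OF this, of 2]
  show ?thesis by (simp add: numeral_2_eq_2 algebra_simps)
qed

lemma fact_ge_2pow3: "2 * 3^k \<le> (fact (k+2) :: real)"
proof (induction k)
  case 0 then show ?case by simp
next
  case (Suc k)
  have e: "fact (Suc k + 2) = real (k+3) * fact (k+2)"
    proof -
    have "Suc k + 2 = Suc (k+2)" by simp
    then show ?thesis by (simp only: fact_Suc) (simp add: algebra_simps)
  qed
  have "(3::real) * fact (k+2) \<le> real (k+3) * fact (k+2)"
    by (intro mult_right_mono) auto
  then have "3 * (2 * 3^k) \<le> (fact (Suc k + 2)::real)" using Suc e by linarith
  then show ?case by simp
qed

lemma phi_le_exp: assumes "0 \<le> (y::real)" shows "exp y - 1 - y \<le> y^2 * exp y / 2"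
proof -
  have g: "(\<lambda>k. y^2/2 * (y^k / fact k)) sums (y^2/2 * exp y)"
    using exp_converges[of y] by (intro sums_mult) (simp add: divide_inverse mult.commute)
  have "\<And>k. y^(k+2) / fact (k+2) \<le> y^2/2 * (y^k / fact k)"
  proof -
    fix k
    have f: "2 * fact k \<le> (fact (k+2)::real)"
      by (simp add: algebra_simps)
    have "y^(k+2) / fact (k+2) \<le> y^(k+2) / (2 * fact k)"
      by (intro divide_left_mono f) (use assms in auto)
    also have "\<dots> = y^2/2 * (y^k / fact k)" by (simp add: power_add field_simps power2_eq_square)
    finally show "y^(k+2) / fact (k+2) \<le> y^2/2 * (y^k / fact k)" .
  qed
  from sums_le[OF this phi_sums g] show ?thesis by simp
qed

lemma phi_le_bern: assumes "0 \<le> (y::real)" "y < 3" shows "exp y - 1 - y \<le> y^2 / (2 * (1 - y/3))"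
proof -
  have "norm (y/3) < 1" using assms by simp
  from geometric_sums[OF this]
  have g: "(\<lambda>k. y^2/2 * (y/3)^k) sums (y^2/2 * (1 / (1 - y/3)))"
    by (intro sums_mult)
  have "\<And>k. y^(k+2) / fact (k+2) \<le> y^2/2 * (y/3)^k"
  proof -
    fix k
    have "y^(k+2) / fact (k+2) \<le> y^(k+2) / (2 * 3^k)"
      by (intro divide_left_mono fact_ge_2pow3) (use assms in auto)
    also have "\<dots> = y^2/2 * (y/3)^k" by (simp add: power_add field_simps power_divide power2_eq_square)
    finally show "y^(k+2) / fact (k+2) \<le> y^2/2 * (y/3)^k" .
  qed
  from sums_le[OF this phi_sums g] show ?thesis using assms by (simp add: field_simps)
qed

lemma phi_neg: assumes "0 \<le> (y::real)" shows "exp (-y) - 1 + y \<le> y^2 / 2"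
proof -
  define g where "g x = 1 - x + x^2/2 - exp (-x)" for x :: real
  have d: "\<And>x. (g has_real_derivative (-1 + x + exp (-x))) (at x)"
    unfolding g_def by (auto intro!: derivative_eq_intros simp: power2_eq_square)
  have "g 0 \<le> g y"
  proof (rule DERIV_nonneg_imp_nondecreasing[OF assms])
    fix x assume "0 \<le> x" "x \<le> y"
    show "\<exists>y. (g has_real_derivative y) (at x) \<and> 0 \<le> y"
      using d[of x] exp_ge_add_one_self[of "-x"] by auto
  qed
  then show ?thesis by (simp add: g_def)
qed

lemma xexp_le: assumes "0 < (a::real)" shows "x * exp (-(a*x)) \<le> 1 / (exp 1 * a)"
proof -
  have "a * x \<le> exp (a*x - 1)" using exp_ge_add_one_self[of "a*x - 1"] by simp
  then have "a * x * exp (-(a*x)) \<le> exp (a*x - 1) * exp (-(a*x))"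
    by (intro mult_right_mono) auto
  also have "\<dots> = exp (-1)" by (simp flip: exp_add)
  finally show ?thesis using assms by (simp add: field_simps exp_minus)
qed


lemma pw_up_neg:
  fixes U t N :: real
  assumes "0 \<le> U" "U \<le> 1" "0 < t" "0 < N"
  shows "exp (t * (- U / N)) \<le> 1 + t * (- U / N) + t^2 * U / (2 * N^2)"
proof -
  have "exp (- (t*U/N)) - 1 + t*U/N \<le> (t*U/N)^2/2"
    by (rule phi_neg) (use assms in auto)
  also have "(t*U/N)^2/2 = t^2 * (U*U) / (2 * N^2)" by (simp add: power2_eq_square field_simps)
  also have "\<dots> \<le> t^2 * U / (2 * N^2)"
    using assms by (intro divide_right_mono mult_left_mono) (auto simp: mult_left_le)
  finally show ?thesis by (simp add: field_simps)
qed

lemma pw_lo_pos: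
  fixes U t N :: real
  assumes "0 \<le> U" "U \<le> 1" "0 < t" "0 < N" "t < 3 * N"
  shows "exp (t * U / N) \<le> 1 + t * U / N + t^2 * U / (2 * N^2 * (1 - t / (3*N)))"
proof -
  have y: "t*U/N \<le> t/N" using assms by (simp add: divide_right_mono mult_left_le)
  have y3: "t/N < 3" using assms by (simp add: field_simps)
  have "exp (t*U/N) - 1 - t*U/N \<le> (t*U/N)^2 / (2 * (1 - (t*U/N)/3))"
    by (rule phi_le_bern) (use assms y y3 in auto)
  also have "\<dots> \<le> (t^2 * U / N^2) / (2 * (1 - (t/N)/3))"
  proof (rule frac_le)
    show "0 \<le> t\<^sup>2 * U / N\<^sup>2" using assms by simp
    show "(t * U / N)\<^sup>2 \<le> t\<^sup>2 * U / N\<^sup>2"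
    proof -
      have "U * (U * (t * t)) \<le> 1 * (U * (t * t))"
        using assms by (intro mult_right_mono) auto
      then show ?thesis using assms by (simp add: power2_eq_square field_simps)
    qed
    show "0 < 2 * (1 - t / N / 3)" using y3 by simp
    have "t * U / N / 3 \<le> t / N / 3" using y by (rule divide_right_mono) simp
    then show "2 * (1 - t / N / 3) \<le> 2 * (1 - t * U / N / 3)" by (intro mult_left_mono diff_left_mono) auto
  qed
  also have "\<dots> = t^2 * U / (2 * N^2 * (1 - t / (3*N)))" by (simp add: field_simps)
  finally show ?thesis by simp
qed

lemma half_sum: "(a::real)/(2*x) + a/(2*x) = a/x"
  by (cases "x=0") (simp_all add: field_simps)

lemma phi_nonneg: "0 \<le> exp (y::real) - 1 - y"
  using exp_ge_add_one_self[of y] by linarith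

lemma (in prob_space) chernoff_subgamma:
  assumes S[measurable]: "S \<in> borel_measurable M"
    and int: "\<And>t. 0 < t \<Longrightarrow> t < 1/c \<Longrightarrow> integrable M (\<lambda>w. exp (t * S w))"
    and mgf: "\<And>t. 0 < t \<Longrightarrow> t < 1/c \<Longrightarrow> (\<integral>w. exp (t * S w) \<partial>M) \<le> exp (t * \<mu> + vv * t^2/(2 * (1-c * t)))"
    and vv: "0 < vv" and c: "0 < c" and L: "0 \<le> L"
  shows "prob {w\<in>space M. \<mu> + sqrt(2 * vv * L) + c * L \<le> S w} \<le> exp (-L)"
proof (cases "L = 0")
  case True then show ?thesis by simp
next
  case False
  with L have L: "0 < L" by simp
  define a where "a = sqrt(2 * vv * L)"
  have a: "0 < a" using vv L by (simp add: a_def)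
  have a2: "a^2 = 2 * vv * L" using vv L by (simp add: a_def)
  define t where "t = a / (vv + c * a)"
  have vca: "0 < vv + c * a" using vv c a by (simp add: add_pos_pos)
  have t: "0 < t" using a vca by (simp add: t_def)
  have ct: "1 - c * t = vv/(vv+c * a)" using vca by (simp add: t_def field_simps)
  have tc: "t < 1/c" using ct vv vca c
    by (smt (verit, ccfv_SIG) divide_pos_pos mult.commute pos_less_divide_eq)
  define s where "s = \<mu> + a + c * L"
  have key: "t * \<mu> + vv * t^2/(2 * (1-c * t)) - t * s = -L"
  proof -
    have "vv * t^2/(2 * (1-c * t)) = vv * L/(vv+c * a)"
    proof -
      have "vv * t^2/(2 * (1-c * t)) = t^2 * (vv + c * a) / 2"
        unfolding ct using vca vv by (simp add: field_simps)
      also have "\<dots> = a^2 / (2 * (vv + c * a))"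
      proof -
        have "t^2 * (vv + c * a) = a^2 / (vv + c * a)"
          unfolding t_def using vca by (simp add: power2_eq_square)
        then show ?thesis by simp
      qed
      also have "\<dots> = vv * L/(vv+c * a)" unfolding a2 using vca by (simp add: field_simps)
      finally show ?thesis .
    qed
    moreover have "t * s = t * \<mu> + (2 * vv * L + c * a*L)/(vv+c * a)"
    proof -
      have "t * s = t * \<mu> + (a*a + c * a * L)/(vv+c * a)"
        unfolding s_def t_def by (simp add: ring_distribs add_divide_distrib)
      then show ?thesis using a2 by (simp add: power2_eq_square)
    qed
    moreover have "(2 * vv * L + c * a*L)/(vv+c * a) = L + vv * L/(vv+c * a)"
    proof -
      have "(2 * vv * L + c * a*L) = L*(vv+c * a) + vv * L" by (simp add: algebra_simps)
      then have "(2 * vv * L + c * a*L)/(vv+c * a) = L*(vv+c * a)/(vv+c * a) + vv * L/(vv+c * a)"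
        by (metis add_divide_distrib)
      then show ?thesis using vca by simp
    qed
    ultimately show ?thesis by simp
  qed
  have "{w\<in>space M. s \<le> S w} = {w\<in>space M. exp (t * s) \<le> exp (t * S w)}"
    using t by auto
  then have "prob {w\<in>space M. s \<le> S w} = prob {w\<in>space M. exp (t * s) \<le> exp (t * S w)}" by simp
  also have "\<dots> \<le> (\<integral>w. exp (t * S w) \<partial>M) / exp (t * s)"
    by (intro integral_Markov_inequality_measure[where A="space M"] int t tc) auto
  also have "\<dots> \<le> exp (t * \<mu> + vv * t^2/(2 * (1-c * t))) / exp (t * s)"
    by (intro divide_right_mono mgf t tc) auto
  also have "\<dots> = exp (-L)" using key by (simp flip: exp_diff)
  finally show ?thesis by (simp add: s_def a_def)
qed

lemma PiM_bool_all_sets: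
  assumes K: "finite K" and S: "S \<subseteq> space (PiM K (\<lambda>_. count_space (UNIV::bool set)))"
  shows "S \<in> sets (PiM K (\<lambda>_. count_space (UNIV::bool set)))"
proof -
  have sp: "space (PiM K (\<lambda>_. count_space (UNIV::bool set))) = PiE K (\<lambda>_. UNIV)"
    by (simp add: space_PiM)
  have fin: "finite S" using S K unfolding sp by (rule finite_subset[OF _ finite_PiE]) auto
  have "S = (\<Union>f\<in>S. PiE K (\<lambda>k. {f k}))"
  proof -
    have "\<And>f. f \<in> S \<Longrightarrow> PiE K (\<lambda>k. {f k}) = {f}"
      using S unfolding sp by (intro PiE_singleton) (auto simp: PiE_def)
    then show ?thesis by auto
  qed
  also have "\<dots> \<in> sets (PiM K (\<lambda>_. count_space (UNIV::bool set)))"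
    using fin K by (intro sets.finite_UN sets_PiM_I_finite) auto
  finally show ?thesis .
qed

lemma PiM_bool_measurable:
  assumes "finite K"
  shows "h \<in> measurable (PiM K (\<lambda>_. count_space (UNIV::bool set))) (borel :: real measure)"
  by (rule measurableI) (auto intro!: PiM_bool_all_sets assms)

lemma Zn_cong: "(\<And>j. j \<in> {1..n} \<Longrightarrow> X j u w = Y j u w') \<Longrightarrow> Zn X n u w = Zn Y n u w'"
  unfolding Zn_def by auto

lemma Ugamma_cong: "(\<And>j. j \<in> {1..n} \<Longrightarrow> X j u w = Y j u w') \<Longrightarrow> Ugamma g X n u w = Ugamma g Y n u w'"
  unfolding Ugamma_def by (intro sum.cong refl) auto

lemma (in prob_space) indep_groups:
  fixes X :: "nat \<Rightarrow> 'b \<Rightarrow> 'a \<Rightarrow> bool"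
  assumes ind: "indep_vars (\<lambda>_. count_space UNIV) (\<lambda>(i, u). X i u) ({1..} \<times> A)"
    and n: "1 \<le> n"
    and h: "\<And>u w. h u (\<lambda>i v (_::unit). restrict (\<lambda>k. (case k of (i,u) \<Rightarrow> X i u) w) ({1..n}\<times>{u}) (i,v)) = Y u w"
  shows "indep_vars (\<lambda>_. borel) (\<lambda>u w. (Y u w :: real)) A"
proof -
  have r: "indep_vars (\<lambda>u. PiM ({1..n}\<times>{u}) (\<lambda>_. count_space UNIV))
     (\<lambda>u w. restrict (\<lambda>k. (\<lambda>(i, u). X i u) k w) ({1..n}\<times>{u})) A"
    by (rule indep_vars_restrict[OF ind]) (use n in \<open>auto simp: disjoint_family_on_def\<close>)
  have "indep_vars (\<lambda>_. borel) (\<lambda>u w. (\<lambda>f. h u (\<lambda>i v (_::unit). f (i,v)))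
          (restrict (\<lambda>k. (\<lambda>(i, u). X i u) k w) ({1..n}\<times>{u}))) A"
    by (rule indep_vars_compose2[OF r]) (rule PiM_bool_measurable, simp)
  then show ?thesis using h by (simp add: case_prod_beta')
qed


lemma (in prob_space) integral_ind:
  assumes "(\<lambda>w. if P w then 1 else (0::real)) \<in> borel_measurable M"
  shows "(\<integral>w. (if P w then c else 0) \<partial>M) = c * prob {w\<in>space M. P w}"
proof -
  have S: "{w\<in>space M. P w} \<in> events"
  proof -
    have "(\<lambda>w. if P w then 1 else (0::real)) -` {1} \<inter> space M \<in> events"
      using assms by (rule measurable_sets) simp
    moreover have "(\<lambda>w. if P w then 1 else (0::real)) -` {1} \<inter> space M = {w\<in>space M. P w}" by (auto split: if_splits)
    ultimately show ?thesis by (auto split: if_splits)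
  qed
  have "(\<integral>w. (if P w then c else 0) \<partial>M) = (\<integral>w. c * indicator {w\<in>space M. P w} w \<partial>M)"
    by (intro Bochner_Integration.integral_cong) (auto simp: indicator_def)
  also have "\<dots> = c * prob {w\<in>space M. P w}"
    using S by simp
  finally show ?thesis .
qed

lemma sqrt2_ge: "1.4 \<le> sqrt (2::real)" by (rule real_le_rsqrt) (simp add: power2_eq_square)

lemma up_case:
  fixes r L N Q :: real
  assumes r: "0 \<le> r" and L: "0 < L" and N: "0 < N" and r2: "r^2 = Q * L / N"
    and lt: "(1 + sqrt 2) * r + L / (3*N) < Q"
  shows "2 * r + L / N \<le> (1 + sqrt 2) * r + L / (3*N)"
proof (rule ccontr)
  assume h: "\<not> ?thesis"
  have s: "2.4 * r \<le> (1 + sqrt 2) * r" using sqrt2_ge r by (intro mult_right_mono) auto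
  have "0.4 * r < (2/3) * (L / N)" using h s by (simp add: field_simps)
  then have rN: "r * N \<le> (5/3) * L" using N by (simp add: field_simps)
  have "Q = r * (r * N) / L" using r2 L N by (simp add: field_simps power2_eq_square)
  also have "\<dots> \<le> r * ((5/3) * L) / L" using rN r L by (intro divide_right_mono mult_left_mono) auto
  also have "\<dots> = (5/3) * r" using L by simp
  also have "\<dots> \<le> (1 + sqrt 2) * r + L / (3*N)"
  proof -
    have "0 \<le> L / (3*N)" using L N by simp
    then show ?thesis using s r by linarith
  qed
  finally show False using lt by simp
qed

locale fat = prob_space M for M :: "'w measure" +
  fixes A :: "'u set" and p :: "'u \<Rightarrow> real" and \<gamma> :: "nat \<Rightarrow> real"
    and X :: "nat \<Rightarrow> 'u \<Rightarrow> 'w \<Rightarrow> bool" and n :: nat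
  assumes finA: "finite A"
    and p01: "\<forall>u\<in>A. 0 \<le> p u \<and> p u \<le> 1"
    and g01: "\<forall>i\<ge>1. 0 < \<gamma> i \<and> \<gamma> i \<le> 1"
    and gmono: "\<forall>i j. 1 \<le> i \<longrightarrow> i \<le> j \<longrightarrow> \<gamma> j \<le> \<gamma> i"
    and ind: "indep_vars (\<lambda>_. count_space UNIV) (\<lambda>(i, u). X i u) ({1..} \<times> A)"
    and dis: "\<forall>i\<ge>1. \<forall>u\<in>A. distr M (count_space UNIV) (X i u) = measure_pmf (bernoulli_pmf (\<gamma> i * p u))"
    and n1: "1 \<le> n"
begin

definition q :: "'u \<Rightarrow> real" where "q u = \<gamma> (n+1) * p u"

definition XX :: "'w \<Rightarrow> 'u \<Rightarrow> nat \<Rightarrow> 'u \<Rightarrow> unit \<Rightarrow> bool" where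
  "XX w u = (\<lambda>i v _. restrict (\<lambda>k. (case k of (i,u) \<Rightarrow> X i u) w) ({1..n}\<times>{u}) (i,v))"

lemma XX_eq: "j \<in> {1..n} \<Longrightarrow> XX w u j u x = X j u w"
  by (simp add: XX_def)

lemma Xmeas: "1 \<le> i \<Longrightarrow> u \<in> A \<Longrightarrow> X i u \<in> measurable M (count_space UNIV)"
  using ind unfolding indep_vars_def2 by auto

lemma meas_group:
  assumes "u \<in> A"
  shows "(\<lambda>w. (g (XX w u) :: real)) \<in> borel_measurable M"
proof -
  have r: "(\<lambda>w. restrict (\<lambda>k. (case k of (i,u) \<Rightarrow> X i u) w) ({1..n}\<times>{u}))
     \<in> measurable M (PiM ({1..n}\<times>{u}) (\<lambda>_. count_space UNIV))"
    by (rule measurable_restrict) (use assms Xmeas in auto)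
  show ?thesis unfolding XX_def
    using measurable_compose[OF r PiM_bool_measurable[where h="\<lambda>f. g (\<lambda>i v (_::unit). f (i,v))"]]
    by simp
qed

lemma indep_group:
  assumes "\<And>u w. h u (XX w u) = Y u w"
  shows "indep_vars (\<lambda>_. borel) (\<lambda>u w. (Y u w :: real)) A"
  by (rule indep_groups[OF ind n1]) (use assms in \<open>simp add: XX_def\<close>)

lemma gpos: "1 \<le> i \<Longrightarrow> 0 < \<gamma> i" using g01 by auto
lemma gle1: "1 \<le> i \<Longrightarrow> \<gamma> i \<le> 1" using g01 by auto
lemma gmono': "1 \<le> i \<Longrightarrow> i \<le> j \<Longrightarrow> \<gamma> j \<le> \<gamma> i" using gmono by auto
lemma p0: "u \<in> A \<Longrightarrow> 0 \<le> p u" using p01 by auto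
lemma p1: "u \<in> A \<Longrightarrow> p u \<le> 1" using p01 by auto

lemma gp01: "1 \<le> i \<Longrightarrow> u \<in> A \<Longrightarrow> 0 \<le> \<gamma> i * p u \<and> \<gamma> i * p u \<le> 1"
  using gpos[of i] gle1[of i] p0[of u] p1[of u] by (auto intro: mult_le_one)

lemma q0: "u \<in> A \<Longrightarrow> 0 \<le> q u" unfolding q_def using gp01[of "n+1" u] by auto
lemma q1: "u \<in> A \<Longrightarrow> q u \<le> 1" unfolding q_def using gp01[of "n+1" u] by auto

lemma probX: assumes "1 \<le> i" "u \<in> A"
  shows "prob {w\<in>space M. X i u w} = \<gamma> i * p u"
proof -
  have "measure (distr M (count_space UNIV) (X i u)) {True} = prob (X i u -` {True} \<inter> space M)"
    by (rule measure_distr) (use Xmeas[OF assms] in auto)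
  also have "X i u -` {True} \<inter> space M = {w\<in>space M. X i u w}" by auto
  finally have "prob {w\<in>space M. X i u w} = measure (measure_pmf (bernoulli_pmf (\<gamma> i * p u))) {True}"
    using dis assms by simp
  also have "\<dots> = \<gamma> i * p u" using gp01[OF assms] by (simp add: measure_pmf_single)
  finally show ?thesis .
qed

lemma Xev: assumes "1 \<le> i" "u \<in> A" shows "{w\<in>space M. X i u w = b} \<in> events"
proof -
  have "X i u -` {b} \<inter> space M \<in> events"
    using Xmeas[OF assms] by (rule measurable_sets) simp
  moreover have "X i u -` {b} \<inter> space M = {w\<in>space M. X i u w = b}" by auto
  ultimately show ?thesis by simp
qed

lemma probXb: assumes "1 \<le> i" "u \<in> A"
  shows "prob {w\<in>space M. X i u w = b} = (if b then \<gamma> i * p u else 1 - \<gamma> i * p u)"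
proof (cases b)
  case True then show ?thesis using probX[OF assms] by simp
next
  case False
  have "{w\<in>space M. X i u w = b} = space M - {w\<in>space M. X i u w}" using False by auto
  then have "prob {w\<in>space M. X i u w = b} = 1 - prob {w\<in>space M. X i u w}"
    using prob_compl[OF Xev[OF assms, of True]] by simp
  then show ?thesis using probX[OF assms] False by simp
qed

lemma prob_pattern:
  assumes u: "u \<in> A" and J: "finite J" "J \<subseteq> {1..}"
  shows "prob {w\<in>space M. \<forall>j\<in>J. X j u w = b j} = (\<Prod>j\<in>J. if b j then \<gamma> j * p u else 1 - \<gamma> j * p u)"
proof (cases "J = {}")
  case True then show ?thesis by (simp add: prob_space)
next
  case False
  define F where "F = (\<lambda>k. {(case k of (i,u) \<Rightarrow> X i u) -` B \<inter> space M | B. B \<in> sets (count_space (UNIV::bool set))})"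
  have indF: "indep_sets F ({1..}\<times>A)"
    using ind unfolding indep_vars_def2 F_def by auto
  define AA where "AA k = (case k of (j,v) \<Rightarrow> X j v -` {b j} \<inter> space M)" for k
  have "prob (\<Inter>k\<in>J\<times>{u}. AA k) = (\<Prod>k\<in>J\<times>{u}. prob (AA k))"
    by (rule indep_setsD[OF indF]) (use u J False in \<open>auto simp: F_def AA_def\<close>)
  moreover have "(\<Inter>k\<in>J\<times>{u}. AA k) = {w\<in>space M. \<forall>j\<in>J. X j u w = b j}"
    using False by (auto simp: AA_def)
  moreover have "(\<Prod>k\<in>J\<times>{u}. prob (AA k)) = (\<Prod>j\<in>J. prob (AA (j,u)))"
  proof -
    have "J\<times>{u} = (\<lambda>j. (j,u)) ` J" by auto
    then show ?thesis by (simp add: prod.reindex inj_on_def)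
  qed
  moreover have "\<And>j. j \<in> J \<Longrightarrow> prob (AA (j,u)) = (if b j then \<gamma> j * p u else 1 - \<gamma> j * p u)"
  proof -
    fix j assume j: "j \<in> J"
    have "AA (j,u) = {w\<in>space M. X j u w = b j}" by (auto simp: AA_def)
    then show "prob (AA (j,u)) = (if b j then \<gamma> j * p u else 1 - \<gamma> j * p u)"
      using probXb[of j u "b j"] j J u by auto
  qed
  ultimately show ?thesis by simp
qed


definition Dg :: "(nat \<Rightarrow> 'u \<Rightarrow> 'x \<Rightarrow> bool) \<Rightarrow> 'u \<Rightarrow> 'x \<Rightarrow> real" where
  "Dg Y u w = (if Zn Y n u w then q u else 0) - Ugamma \<gamma> Y n u w / real n"

definition indg :: "(nat \<Rightarrow> 'u \<Rightarrow> 'x \<Rightarrow> bool) \<Rightarrow> 'u \<Rightarrow> nat \<Rightarrow> 'x \<Rightarrow> real" where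
  "indg Y u i w = (if Y i u w \<and> (\<forall>j\<in>{1..n}-{i}. \<not> Y j u w) then 1 else 0)"

lemma Zn_XX: "Zn (XX w u) n u x = Zn X n u w"
  by (rule Zn_cong) (simp add: XX_eq)
lemma Ug_XX: "Ugamma \<gamma> (XX w u) n u x = Ugamma \<gamma> X n u w"
  by (rule Ugamma_cong) (simp add: XX_eq)
lemma Dg_XX: "Dg (XX w u) u x = Dg X u w"
  by (simp add: Dg_def Zn_XX Ug_XX)
lemma indg_XX: "i \<in> {1..n} \<Longrightarrow> indg (XX w u) u i x = indg X u i w"
  by (simp add: indg_def XX_eq)

lemma meas_Z: "u \<in> A \<Longrightarrow> (\<lambda>w. if Zn X n u w then 1 else (0::real)) \<in> borel_measurable M"
  using meas_group[of u "\<lambda>Y. if Zn Y n u () then 1 else 0"] by (simp add: Zn_XX)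
lemma meas_ind: "u \<in> A \<Longrightarrow> i \<in> {1..n} \<Longrightarrow> indg X u i \<in> borel_measurable M"
  using meas_group[of u "\<lambda>Y. indg Y u i ()"] by (simp add: indg_XX)
lemma meas_U: "u \<in> A \<Longrightarrow> Ugamma \<gamma> X n u \<in> borel_measurable M"
  using meas_group[of u "\<lambda>Y. Ugamma \<gamma> Y n u ()"] by (simp add: Ug_XX)
lemma meas_fD: "u \<in> A \<Longrightarrow> (\<lambda>w. f (Dg X u w) :: real) \<in> borel_measurable M"
  using meas_group[of u "\<lambda>Y. f (Dg Y u ())"] by (simp add: Dg_XX)

lemma U_sum: "Ugamma \<gamma> X n u w = (\<Sum>i\<in>{1..n}. indg X u i w * (\<gamma> (n+1) / \<gamma> i))"
  unfolding Ugamma_def indg_def by simp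

lemma sum_ind_le1: "(\<Sum>i\<in>{1..n}. indg X u i w) \<le> 1"
proof -
  have "(\<Sum>i\<in>{1..n}. indg X u i w) = real (card {i\<in>{1..n}. X i u w \<and> (\<forall>j\<in>{1..n}-{i}. \<not> X j u w)})"
    unfolding indg_def by (simp add: sum.If_cases Int_def conj_commute conj_left_commute)
  also have "card {i\<in>{1..n}. X i u w \<and> (\<forall>j\<in>{1..n}-{i}. \<not> X j u w)} \<le> 1"
    using card_le_Suc0_iff_eq[of "{i\<in>{1..n}. X i u w \<and> (\<forall>j\<in>{1..n}-{i}. \<not> X j u w)}"] by auto
  finally show ?thesis by simp
qed

lemma ind01: "0 \<le> indg X u i w" "indg X u i w \<le> 1"
  unfolding indg_def by auto

lemma U_nonneg: "0 \<le> Ugamma \<gamma> X n u w"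
  unfolding U_sum using gpos by (intro sum_nonneg mult_nonneg_nonneg ind01 divide_nonneg_nonneg) (auto intro: less_imp_le)

lemma U_le1: "Ugamma \<gamma> X n u w \<le> 1"
proof -
  have "Ugamma \<gamma> X n u w \<le> (\<Sum>i\<in>{1..n}. indg X u i w)"
    unfolding U_sum
  proof (rule sum_mono)
    fix i assume i: "i \<in> {1..n}"
    have "\<gamma> (n+1) / \<gamma> i \<le> 1" using gpos[of i] gmono'[of i "n+1"] i by auto
    then show "indg X u i w * (\<gamma> (n+1) / \<gamma> i) \<le> indg X u i w"
      using ind01[of u i w] mult_left_le[of "\<gamma> (n+1) / \<gamma> i" "indg X u i w"] by simp
  qed
  also have "\<dots> \<le> 1" by (rule sum_ind_le1)
  finally show ?thesis .
qed

lemma Z_U0: "Zn X n u w \<Longrightarrow> Ugamma \<gamma> X n u w = 0"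
  unfolding U_sum indg_def Zn_def by (intro sum.neutral) auto

definition P0 :: "'u \<Rightarrow> real" where "P0 u = (\<Prod>j\<in>{1..n}. 1 - \<gamma> j * p u)"
definition Bq :: "'u \<Rightarrow> nat \<Rightarrow> real" where "Bq u i = (\<Prod>j\<in>{1..n}-{i}. 1 - \<gamma> j * p u)"

lemma probZ: "u \<in> A \<Longrightarrow> prob {w\<in>space M. Zn X n u w} = P0 u"
proof -
  assume u: "u \<in> A"
  have "{w\<in>space M. Zn X n u w} = {w\<in>space M. \<forall>j\<in>{1..n}. X j u w = False}"
    by (auto simp: Zn_def)
  then show ?thesis using prob_pattern[OF u, of "{1..n}" "\<lambda>_. False"] by (simp add: P0_def)
qed

lemma prob_only: "u \<in> A \<Longrightarrow> i \<in> {1..n} \<Longrightarrow>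
   prob {w\<in>space M. X i u w \<and> (\<forall>j\<in>{1..n}-{i}. \<not> X j u w)} = \<gamma> i * p u * Bq u i"
proof -
  assume u: "u \<in> A" and i: "i \<in> {1..n}"
  have "{w\<in>space M. X i u w \<and> (\<forall>j\<in>{1..n}-{i}. \<not> X j u w)} = {w\<in>space M. \<forall>j\<in>{1..n}. X j u w = (j = i)}"
    using i by auto
  moreover have "(\<Prod>j\<in>{1..n}. if j = i then \<gamma> j * p u else 1 - \<gamma> j * p u) = \<gamma> i * p u * Bq u i"
    unfolding Bq_def using i by (subst prod.remove[of _ i]) (auto intro!: prod.cong)
  ultimately show ?thesis using prob_pattern[OF u, of "{1..n}" "\<lambda>j. j = i"] by simp
qed

lemma P0_split: "i \<in> {1..n} \<Longrightarrow> P0 u = (1 - \<gamma> i * p u) * Bq u i"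
  unfolding P0_def Bq_def by (subst prod.remove[of _ i]) auto

lemma Bq01: "u \<in> A \<Longrightarrow> 0 \<le> Bq u i \<and> Bq u i \<le> 1"
  unfolding Bq_def using gp01 by (auto intro!: prod_nonneg prod_le_1)

lemma P0_exp: assumes u: "u \<in> A" shows "P0 u \<le> exp (- (real n * q u))"
proof -
  have "P0 u \<le> (\<Prod>j\<in>{1..n}. exp (- q u))"
    unfolding P0_def
  proof (rule prod_mono)
    fix j assume j: "j \<in> {1..n}"
    have "\<gamma> (n+1) \<le> \<gamma> j" using gmono'[of j "n+1"] j by auto
    then have "q u \<le> \<gamma> j * p u" unfolding q_def using p0[OF u] by (intro mult_right_mono) auto
    then have "1 - \<gamma> j * p u \<le> exp (- q u)" using exp_ge_add_one_self[of "- q u"] by linarith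
    then show "0 \<le> 1 - \<gamma> j * p u \<and> 1 - \<gamma> j * p u \<le> exp (- q u)" using gp01[of j u] j u by auto
  qed
  also have "\<dots> = exp (- (real n * q u))" by (simp add: exp_of_nat_mult[symmetric])
  finally show ?thesis .
qed


lemma int_bnd: "f \<in> borel_measurable M \<Longrightarrow> (\<And>w. \<bar>f w\<bar> \<le> B) \<Longrightarrow> integrable M (f :: 'w \<Rightarrow> real)"
  by (rule integrable_const_bound[where B=B]) auto

lemma int_Z: "u \<in> A \<Longrightarrow> integrable M (\<lambda>w. if Zn X n u w then c else (0::real))"
proof -
  assume u: "u \<in> A"
  have "(\<lambda>w. c * (if Zn X n u w then 1 else (0::real))) \<in> borel_measurable M"
    using meas_Z[OF u] by simp
  moreover have "(\<lambda>w. c * (if Zn X n u w then 1 else (0::real))) = (\<lambda>w. if Zn X n u w then c else 0)"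
    by auto
  ultimately show ?thesis by (intro int_bnd[where B="\<bar>c\<bar>"]) auto
qed

lemma E_Z: "u \<in> A \<Longrightarrow> (\<integral>w. (if Zn X n u w then c else (0::real)) \<partial>M) = c * P0 u"
  using integral_ind[OF meas_Z] probZ by simp

lemma int_ind: "u \<in> A \<Longrightarrow> i \<in> {1..n} \<Longrightarrow> integrable M (indg X u i)"
  by (rule int_bnd[OF meas_ind, where B=1]) (use ind01 in auto)

lemma E_ind: "u \<in> A \<Longrightarrow> i \<in> {1..n} \<Longrightarrow> (\<integral>w. indg X u i w \<partial>M) = \<gamma> i * p u * Bq u i"
proof -
  assume u: "u \<in> A" and i: "i \<in> {1..n}"
  have m: "(\<lambda>w. if X i u w \<and> (\<forall>j\<in>{1..n}-{i}. \<not> X j u w) then 1 else (0::real)) \<in> borel_measurable M"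
    using meas_ind[OF u i] unfolding indg_def by simp
  show ?thesis unfolding indg_def using integral_ind[OF m, of 1] prob_only[OF u i] by simp
qed

lemma int_U: "u \<in> A \<Longrightarrow> integrable M (Ugamma \<gamma> X n u)"
  by (rule int_bnd[OF meas_U, where B=1]) (use U_nonneg U_le1 in auto)

lemma E_U: "u \<in> A \<Longrightarrow> (\<integral>w. Ugamma \<gamma> X n u w \<partial>M) = (\<Sum>i\<in>{1..n}. q u * Bq u i)"
proof -
  assume u: "u \<in> A"
  have "(\<integral>w. Ugamma \<gamma> X n u w \<partial>M) = (\<integral>w. (\<Sum>i\<in>{1..n}. indg X u i w * (\<gamma> (n+1) / \<gamma> i)) \<partial>M)"
    by (simp add: U_sum)
  also have "\<dots> = (\<Sum>i\<in>{1..n}. (\<integral>w. indg X u i w * (\<gamma> (n+1) / \<gamma> i) \<partial>M))"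
    by (rule Bochner_Integration.integral_sum) (use int_ind[OF u] in auto)
  also have "\<dots> = (\<Sum>i\<in>{1..n}. q u * Bq u i)"
  proof (rule sum.cong[OF refl])
    fix i assume i: "i \<in> {1..n}"
    have "(\<integral>w. indg X u i w * (\<gamma> (n+1) / \<gamma> i) \<partial>M) = \<gamma> i * p u * Bq u i * (\<gamma> (n+1) / \<gamma> i)"
      using E_ind[OF u i] by simp
    also have "\<dots> = q u * Bq u i" using gpos[of i] i by (simp add: q_def field_simps)
    finally show "(\<integral>w. indg X u i w * (\<gamma> (n+1) / \<gamma> i) \<partial>M) = q u * Bq u i" .
  qed
  finally show ?thesis .
qed

lemma sum_only_le1: "u \<in> A \<Longrightarrow> (\<Sum>i\<in>{1..n}. \<gamma> i * p u * Bq u i) \<le> 1"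
proof -
  assume u: "u \<in> A"
  have "(\<Sum>i\<in>{1..n}. \<gamma> i * p u * Bq u i) = (\<Sum>i\<in>{1..n}. (\<integral>w. indg X u i w \<partial>M))"
    using E_ind[OF u] by simp
  also have "\<dots> = (\<integral>w. (\<Sum>i\<in>{1..n}. indg X u i w) \<partial>M)"
    by (rule Bochner_Integration.integral_sum[symmetric]) (use int_ind[OF u] in auto)
  also have "\<dots> \<le> (\<integral>w. 1 \<partial>M)"
    by (rule integral_mono) (use int_ind[OF u] sum_ind_le1 in auto)
  finally show ?thesis by (simp add: prob_space)
qed

lemma EU_le: "u \<in> A \<Longrightarrow> (\<integral>w. Ugamma \<gamma> X n u w \<partial>M) \<le> real n * q u"
proof -
  assume u: "u \<in> A"
  have "(\<Sum>i\<in>{1..n}. q u * Bq u i) \<le> (\<Sum>i\<in>{1..n}. q u)"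
    by (intro sum_mono) (use Bq01[OF u] q0[OF u] in \<open>auto simp: mult_left_le\<close>)
  then show ?thesis using E_U[OF u] by simp
qed

lemma int_D: "u \<in> A \<Longrightarrow> integrable M (Dg X u)"
proof -
  assume u: "u \<in> A"
  have "\<bar>Dg X u w\<bar> \<le> 2" for w
  proof -
    have "0 \<le> Ugamma \<gamma> X n u w / real n" "Ugamma \<gamma> X n u w / real n \<le> 1"
      using U_nonneg[of u w] U_le1[of u w] n1 by (auto simp: field_simps)
    then show ?thesis using q0[OF u] q1[OF u] unfolding Dg_def by auto
  qed
  then show ?thesis using meas_fD[OF u, of "\<lambda>x. x"] by (intro int_bnd[where B=2]) auto
qed

lemma E_D: "u \<in> A \<Longrightarrow> (\<integral>w. Dg X u w \<partial>M) = q u * P0 u - (\<Sum>i\<in>{1..n}. q u * Bq u i) / real n"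
proof -
  assume u: "u \<in> A"
  have "(\<integral>w. Dg X u w \<partial>M) = (\<integral>w. (if Zn X n u w then q u else 0) \<partial>M) - (\<integral>w. Ugamma \<gamma> X n u w / real n \<partial>M)"
    unfolding Dg_def by (rule Bochner_Integration.integral_diff) (use int_Z[OF u] int_U[OF u] in auto)
  then show ?thesis using E_Z[OF u] E_U[OF u] by simp
qed

lemma ED_bounds: assumes u: "u \<in> A"
  shows "(\<integral>w. Dg X u w \<partial>M) \<le> 0" "- q u / real n \<le> (\<integral>w. Dg X u w \<partial>M)"
proof -
  have Bs: "\<And>i. i \<in> {1..n} \<Longrightarrow> Bq u i = P0 u + \<gamma> i * p u * Bq u i"
    using P0_split by (simp add: algebra_simps)
  have "(\<Sum>i\<in>{1..n}. q u * Bq u i) = (\<Sum>i\<in>{1..n}. q u * P0 u + q u * (\<gamma> i * p u * Bq u i))"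
    by (intro sum.cong refl) (subst Bs, auto simp: algebra_simps)
  also have "\<dots> = real n * (q u * P0 u) + q u * (\<Sum>i\<in>{1..n}. \<gamma> i * p u * Bq u i)"
    by (simp add: sum.distrib sum_distrib_left)
  finally have e: "(\<Sum>i\<in>{1..n}. q u * Bq u i) / real n = q u * P0 u + q u * (\<Sum>i\<in>{1..n}. \<gamma> i * p u * Bq u i) / real n"
    using n1 by (simp add: field_simps)
  have s0: "0 \<le> (\<Sum>i\<in>{1..n}. \<gamma> i * p u * Bq u i)"
    using gp01 Bq01[OF u] u by (intro sum_nonneg mult_nonneg_nonneg) (auto simp: p0 gpos less_imp_le)
  have s1: "q u * (\<Sum>i\<in>{1..n}. \<gamma> i * p u * Bq u i) \<le> q u"
    using sum_only_le1[OF u] q0[OF u] by (simp add: mult_left_le)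
  show "(\<integral>w. Dg X u w \<partial>M) \<le> 0"
    using E_D[OF u] e s0 q0[OF u] n1 by simp
  show "- q u / real n \<le> (\<integral>w. Dg X u w \<partial>M)"
    using E_D[OF u] e s1 n1 by (simp add: divide_right_mono)
qed


lemma D_Z: "Zn X n u w \<Longrightarrow> Dg X u w = q u"
  unfolding Dg_def using Z_U0 by simp
lemma D_nZ: "\<not> Zn X n u w \<Longrightarrow> Dg X u w = - (Ugamma \<gamma> X n u w / real n)"
  unfolding Dg_def by simp

lemma D_abs: "u \<in> A \<Longrightarrow> \<bar>Dg X u w\<bar> \<le> 1"
proof -
  assume u: "u \<in> A"
  have "0 \<le> Ugamma \<gamma> X n u w / real n" "Ugamma \<gamma> X n u w / real n \<le> 1"
    using U_nonneg[of u w] U_le1[of u w] n1 by (auto simp: field_simps)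
  then show ?thesis using q0[OF u] q1[OF u] D_Z[of u w] D_nZ[of u w] by (cases "Zn X n u w") auto
qed

lemma int_expD: "u \<in> A \<Longrightarrow> integrable M (\<lambda>w. exp (s * Dg X u w))"
proof -
  assume u: "u \<in> A"
  have "\<bar>exp (s * Dg X u w)\<bar> \<le> exp \<bar>s\<bar>" for w
  proof -
    have "s * Dg X u w \<le> \<bar>s\<bar>" using D_abs[OF u, of w]
      by (metis abs_ge_self abs_mult mult.commute mult_left_le order_trans abs_ge_zero)
    then show ?thesis by simp
  qed
  then show ?thesis by (intro int_bnd[OF meas_fD[OF u]]) 
qed

lemma mgf_up: assumes u: "u \<in> A" and t: "0 < t" "t < real n"
  shows "(\<integral>w. exp (t * Dg X u w) \<partial>M) \<le> exp (t * (\<integral>w. Dg X u w \<partial>M) + q u * t^2 / (real n - t))"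
proof -
  define ph where "ph = exp (t * q u) - 1 - t * q u"
  define B where "B w = (if Zn X n u w then ph else 0) + t^2 * Ugamma \<gamma> X n u w / (2 * real n ^ 2)" for w
  have npos: "0 < real n" using n1 by simp
  have pw: "exp (t * Dg X u w) \<le> 1 + t * Dg X u w + B w" for w
  proof (cases "Zn X n u w")
    case True then show ?thesis using D_Z[OF True] Z_U0[OF True] by (simp add: B_def ph_def)
  next
    case False
    have "exp (t * (- (Ugamma \<gamma> X n u w / real n))) \<le> 1 + t * (- (Ugamma \<gamma> X n u w / real n))
       + t^2 * Ugamma \<gamma> X n u w / (2 * real n ^ 2)"
      using pw_up_neg[OF U_nonneg U_le1 t(1) npos] by simp
    then show ?thesis using D_nZ[OF False] False by (simp add: B_def)
  qed
  have iB: "integrable M B"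
    unfolding B_def by (intro Bochner_Integration.integrable_add int_Z[OF u] integrable_divide integrable_mult_right int_U[OF u])
  have EB: "(\<integral>w. B w \<partial>M) = ph * P0 u + t^2 * (\<integral>w. Ugamma \<gamma> X n u w \<partial>M) / (2 * real n ^ 2)"
    unfolding B_def
    by (subst Bochner_Integration.integral_add) (use int_Z[OF u] int_U[OF u] E_Z[OF u] in auto)
  have "(\<integral>w. exp (t * Dg X u w) \<partial>M) \<le> (\<integral>w. 1 + t * Dg X u w + B w \<partial>M)"
    by (intro integral_mono int_expD[OF u] pw Bochner_Integration.integrable_add integrable_mult_right int_D[OF u] iB) auto
  also have "\<dots> = 1 + t * (\<integral>w. Dg X u w \<partial>M) + (\<integral>w. B w \<partial>M)"
    using int_D[OF u] iB by (simp add: prob_space)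
  also have "(\<integral>w. B w \<partial>M) \<le> q u * t^2 / (real n - t)"
  proof -
    have ph0: "0 \<le> ph" unfolding ph_def by (rule phi_nonneg)
    have "ph * P0 u \<le> ph * exp (- (real n * q u))" by (intro mult_left_mono P0_exp u ph0)
    also have "\<dots> \<le> (t * q u)^2 * exp (t * q u) / 2 * exp (- (real n * q u))"
      unfolding ph_def by (intro mult_right_mono phi_le_exp) (use t q0[OF u] in auto)
    also have "\<dots> = t^2 * q u * (q u * exp (- ((real n - t) * q u))) / 2"
      by (simp add: power2_eq_square algebra_simps flip: exp_add)
    also have "\<dots> \<le> t^2 * q u * (1 / (exp 1 * (real n - t))) / 2"
      by (intro divide_right_mono mult_left_mono xexp_le) (use t q0[OF u] in auto)
    also have "\<dots> \<le> t^2 * q u * (1 / (real n - t)) / 2"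
    proof -
      have "1 / (exp 1 * (real n - t)) \<le> 1 / (real n - t)"
        using t by (intro divide_left_mono) (auto simp: mult_le_cancel_right1)
      then show ?thesis using t q0[OF u] by (intro divide_right_mono mult_left_mono) auto
    qed
    finally have b1': "ph * P0 u \<le> t^2 * q u * (1 / (real n - t)) / 2" .
    have "t^2 * q u * (1 / (real n - t)) / 2 = t^2 * q u / (2 * (real n - t))" by simp
    with b1' have b1: "ph * P0 u \<le> t^2 * q u / (2 * (real n - t))" by linarith
    have "t^2 * (\<integral>w. Ugamma \<gamma> X n u w \<partial>M) / (2 * real n ^ 2) \<le> t^2 * (real n * q u) / (2 * real n ^ 2)"
      by (intro divide_right_mono mult_left_mono EU_le u) auto
    also have "\<dots> = t^2 * q u / (2 * real n)" using npos by (simp add: power2_eq_square)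
    also have "\<dots> \<le> t^2 * q u / (2 * (real n - t))"
      using t q0[OF u] by (intro divide_left_mono) auto
    finally have b2: "t^2 * (\<integral>w. Ugamma \<gamma> X n u w \<partial>M) / (2 * real n ^ 2) \<le> t^2 * q u / (2 * (real n - t))" .
    have "t^2 * q u / (2 * (real n - t)) + t^2 * q u / (2 * (real n - t)) = q u * t^2 / (real n - t)"
      by (simp only: half_sum mult.commute)
    then show ?thesis unfolding EB using add_mono[OF b1 b2] by simp
  qed
  then have "1 + t * (\<integral>w. Dg X u w \<partial>M) + (\<integral>w. B w \<partial>M) \<le> 1 + (t * (\<integral>w. Dg X u w \<partial>M) + q u * t^2 / (real n - t))"
    by simp
  also have "\<dots> \<le> exp (t * (\<integral>w. Dg X u w \<partial>M) + q u * t^2 / (real n - t))"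
    by (rule exp_ge_add_one_self)
  finally show ?thesis .
qed

lemma mgf_lo: assumes u: "u \<in> A" and t: "0 < t" "t < 3 * real n"
  shows "(\<integral>w. exp ((- t) * Dg X u w) \<partial>M) \<le> exp ((- t) * (\<integral>w. Dg X u w \<partial>M) + 3 * q u * t^2 / (3 * real n - t))"
proof -
  define K where "K = 2 * real n ^ 2 * (1 - t / (3 * real n))"
  define B where "B w = (if Zn X n u w then t^2 * q u ^ 2 / 2 else 0) + t^2 * Ugamma \<gamma> X n u w / K" for w
  have npos: "0 < real n" using n1 by simp
  have Kpos: "0 < K" unfolding K_def using t npos by (simp add: field_simps)
  have pw: "exp ((- t) * Dg X u w) \<le> 1 + (- t) * Dg X u w + B w" for w
  proof (cases "Zn X n u w")
    case True
    have "exp (- (t * q u)) - 1 + t * q u \<le> (t * q u)^2 / 2"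
      by (rule phi_neg) (use t q0[OF u] in auto)
    then show ?thesis using D_Z[OF True] Z_U0[OF True] True by (simp add: B_def power2_eq_square algebra_simps)
  next
    case False
    have "exp (t * Ugamma \<gamma> X n u w / real n) \<le> 1 + t * Ugamma \<gamma> X n u w / real n
       + t^2 * Ugamma \<gamma> X n u w / (2 * real n ^ 2 * (1 - t / (3 * real n)))"
      by (rule pw_lo_pos[OF U_nonneg U_le1 t(1) npos t(2)])
    then show ?thesis using D_nZ[OF False] False by (simp add: B_def K_def)
  qed
  have iB: "integrable M B"
    unfolding B_def by (intro Bochner_Integration.integrable_add int_Z[OF u] integrable_divide integrable_mult_right int_U[OF u])
  have EB: "(\<integral>w. B w \<partial>M) = t^2 * q u ^ 2 / 2 * P0 u + t^2 * (\<integral>w. Ugamma \<gamma> X n u w \<partial>M) / K"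
    unfolding B_def
    by (subst Bochner_Integration.integral_add) (use int_Z[OF u] int_U[OF u] E_Z[OF u] in auto)
  have "(\<integral>w. exp ((- t) * Dg X u w) \<partial>M) \<le> (\<integral>w. 1 + (- t) * Dg X u w + B w \<partial>M)"
    by (intro integral_mono int_expD[OF u] pw Bochner_Integration.integrable_add integrable_mult_right int_D[OF u] iB) auto
  also have "\<dots> = 1 + (- t) * (\<integral>w. Dg X u w \<partial>M) + (\<integral>w. B w \<partial>M)"
    using int_D[OF u] iB by (simp add: prob_space)
  also have "(\<integral>w. B w \<partial>M) \<le> 3 * q u * t^2 / (3 * real n - t)"
  proof -
    have "t^2 * q u ^ 2 / 2 * P0 u \<le> t^2 * q u ^ 2 / 2 * exp (- (real n * q u))"
      by (intro mult_left_mono P0_exp u) auto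
    also have "\<dots> = t^2 * q u * (q u * exp (- (real n * q u))) / 2"
      by (simp add: power2_eq_square)
    also have "\<dots> \<le> t^2 * q u * (1 / (exp 1 * real n)) / 2"
      by (intro divide_right_mono mult_left_mono xexp_le) (use t q0[OF u] npos in auto)
    also have "\<dots> \<le> t^2 * q u * (1 / real n) / 2"
    proof -
      have "1 / (exp 1 * real n) \<le> 1 / real n"
        using npos by (intro divide_left_mono) (auto simp: mult_le_cancel_right1)
      then show ?thesis using t q0[OF u] by (intro divide_right_mono mult_left_mono) auto
    qed
    also have "\<dots> \<le> 3 * q u * t^2 / (2 * (3 * real n - t))"
    proof -
      have "t^2 * q u * (1 / real n) / 2 = 3 * q u * t^2 / (2 * (3 * real n))"
        using npos by (simp add: field_simps)
      also have "\<dots> \<le> 3 * q u * t^2 / (2 * (3 * real n - t))"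
        using t q0[OF u] by (intro divide_left_mono) auto
      finally show ?thesis .
    qed
    finally have b1: "t^2 * q u ^ 2 / 2 * P0 u \<le> 3 * q u * t^2 / (2 * (3 * real n - t))" .
    have "t^2 * (\<integral>w. Ugamma \<gamma> X n u w \<partial>M) / K \<le> t^2 * (real n * q u) / K"
      by (intro divide_right_mono mult_left_mono EU_le u) (use Kpos in auto)
    also have "\<dots> = 3 * q u * t^2 / (2 * (3 * real n - t))"
      unfolding K_def using npos t by (simp add: field_simps power2_eq_square)
    finally have b2: "t^2 * (\<integral>w. Ugamma \<gamma> X n u w \<partial>M) / K \<le> 3 * q u * t^2 / (2 * (3 * real n - t))" .
    have "3 * q u * t^2 / (2 * (3 * real n - t)) + 3 * q u * t^2 / (2 * (3 * real n - t)) = 3 * q u * t^2 / (3 * real n - t)"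
      by (rule half_sum)
    then show ?thesis unfolding EB using add_mono[OF b1 b2] by simp
  qed
  then have "1 + (- t) * (\<integral>w. Dg X u w \<partial>M) + (\<integral>w. B w \<partial>M) \<le> 1 + ((- t) * (\<integral>w. Dg X u w \<partial>M) + 3 * q u * t^2 / (3 * real n - t))"
    by simp
  also have "\<dots> \<le> exp ((- t) * (\<integral>w. Dg X u w \<partial>M) + 3 * q u * t^2 / (3 * real n - t))"
    by (rule exp_ge_add_one_self)
  finally show ?thesis .
qed


definition SS :: "'w \<Rightarrow> real" where "SS w = (\<Sum>u\<in>A. Dg X u w)"
definition QQ :: real where "QQ = (\<Sum>u\<in>A. q u)"
definition MU :: real where "MU = (\<Sum>u\<in>A. (\<integral>w. Dg X u w \<partial>M))"

lemma meas_SS: "SS \<in> borel_measurable M"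
  unfolding SS_def using meas_fD[of _ "\<lambda>x. x"] by (intro borel_measurable_sum) auto

lemma indep_exp: "indep_vars (\<lambda>_. borel) (\<lambda>u w. exp (s * Dg X u w)) A"
  by (rule indep_group[where h="\<lambda>u Y. exp (s * Dg Y u ())"]) (simp add: Dg_XX)

lemma exp_SS: "exp (s * SS w) = (\<Prod>u\<in>A. exp (s * Dg X u w))"
  unfolding SS_def by (simp add: sum_distrib_left exp_sum finA)

lemma mgf_SS: "(\<integral>w. exp (s * SS w) \<partial>M) = (\<Prod>u\<in>A. (\<integral>w. exp (s * Dg X u w) \<partial>M))"
  unfolding exp_SS by (rule indep_vars_lebesgue_integral[OF finA indep_exp int_expD])

lemma int_SS: "integrable M (\<lambda>w. exp (s * SS w))"
  unfolding exp_SS by (rule indep_vars_integrable[OF finA indep_exp int_expD])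

lemma QQ0: "0 \<le> QQ" unfolding QQ_def using q0 by (intro sum_nonneg) auto

lemma MU_le0: "MU \<le> 0" unfolding MU_def using ED_bounds(1) by (intro sum_nonpos) auto

lemma MU_ge: "- QQ / real n \<le> MU"
proof -
  have "- QQ / real n = (\<Sum>u\<in>A. - q u / real n)" unfolding QQ_def
    by (simp add: sum_negf sum_divide_distrib)
  also have "\<dots> \<le> MU" unfolding MU_def using ED_bounds(2) by (intro sum_mono) auto
  finally show ?thesis .
qed

lemma tail_up: assumes Q: "0 < QQ" and L: "0 \<le> L"
  shows "prob {w\<in>space M. MU + sqrt (2 * (2 * QQ / real n) * L) + (1 / real n) * L \<le> SS w} \<le> exp (- L)"
proof (rule chernoff_subgamma[OF meas_SS int_SS _ _ _ L])
  have npos: "0 < real n" using n1 by simp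
  show "0 < 2 * QQ / real n" using Q npos by simp
  show "0 < 1 / real n" using npos by simp
  fix t :: real assume t: "0 < t" "t < 1 / (1 / real n)"
  then have t': "t < real n" by simp
  have "(\<integral>w. exp (t * SS w) \<partial>M) = (\<Prod>u\<in>A. (\<integral>w. exp (t * Dg X u w) \<partial>M))" by (rule mgf_SS)
  also have "\<dots> \<le> (\<Prod>u\<in>A. exp (t * (\<integral>w. Dg X u w \<partial>M) + q u * t^2 / (real n - t)))"
    by (intro prod_mono conjI integral_nonneg_AE mgf_up t(1) t') auto
  also have "\<dots> = exp (t * MU + QQ * t^2 / (real n - t))"
    unfolding MU_def QQ_def
    by (simp add: exp_sum[OF finA, symmetric] sum.distrib sum_distrib_left sum_divide_distrib sum_distrib_right)
  also have "QQ * t^2 / (real n - t) = 2 * QQ / real n * t\<^sup>2 / (2 * (1 - 1 / real n * t))"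
    using npos t' by (simp add: field_simps)
  finally show "(\<integral>w. exp (t * SS w) \<partial>M) \<le> exp (t * MU + 2 * QQ / real n * t\<^sup>2 / (2 * (1 - 1 / real n * t)))" .
qed

lemma tail_lo: assumes Q: "0 < QQ" and L: "0 \<le> L"
  shows "prob {w\<in>space M. - MU + sqrt (2 * (2 * QQ / real n) * L) + (1 / (3 * real n)) * L \<le> - SS w} \<le> exp (- L)"
proof (rule chernoff_subgamma[of "\<lambda>w. - SS w", OF _ _ _ _ _ L])
  have npos: "0 < real n" using n1 by simp
  show "(\<lambda>w. - SS w) \<in> borel_measurable M" using meas_SS by simp
  show "0 < 2 * QQ / real n" using Q npos by simp
  show "0 < 1 / (3 * real n)" using npos by simp
  fix t :: real assume t: "0 < t" "t < 1 / (1 / (3 * real n))"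
  then have t': "t < 3 * real n" by simp
  show "integrable M (\<lambda>w. exp (t * - SS w))" using int_SS[of "-t"] by simp
  have "(\<integral>w. exp (t * - SS w) \<partial>M) = (\<Prod>u\<in>A. (\<integral>w. exp ((-t) * Dg X u w) \<partial>M))"
    using mgf_SS[of "-t"] by simp
  also have "\<dots> \<le> (\<Prod>u\<in>A. exp ((-t) * (\<integral>w. Dg X u w \<partial>M) + 3 * q u * t^2 / (3 * real n - t)))"
    by (intro prod_mono conjI integral_nonneg_AE mgf_lo t(1) t') auto
  also have "\<dots> = exp (t * (- MU) + 3 * QQ * t^2 / (3 * real n - t))"
    unfolding MU_def QQ_def
    by (simp add: exp_sum[OF finA, symmetric] sum.distrib sum_distrib_left sum_divide_distrib sum_distrib_right sum_negf sum_subtractf)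
  also have "3 * QQ * t^2 / (3 * real n - t) = 2 * QQ / real n * t\<^sup>2 / (2 * (1 - 1 / (3 * real n) * t))"
    using npos t' by (simp add: field_simps)
  finally show "(\<integral>w. exp (t * - SS w) \<partial>M) \<le> exp (t * - MU + 2 * QQ / real n * t\<^sup>2 / (2 * (1 - 1 / (3 * real n) * t)))"
    by simp
qed


lemma Rn_Rhat: "Rn A p \<gamma> X n w - Rhat A \<gamma> X n w = SS w"
proof -
  have "Rn A p \<gamma> X n w = (\<Sum>u\<in>A. (if Zn X n u w then q u else 0))"
    unfolding Rn_def q_def by (intro sum.cong) auto
  moreover have "Rhat A \<gamma> X n w = (\<Sum>u\<in>A. Ugamma \<gamma> X n u w / real n)"
    unfolding Rhat_def by (simp add: sum_divide_distrib)
  ultimately show ?thesis unfolding SS_def Dg_def by (simp add: sum_subtractf)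
qed

lemma SS_le: "SS w \<le> QQ"
  unfolding SS_def QQ_def
proof (intro sum_mono)
  fix u assume u: "u \<in> A"
  have "0 \<le> Ugamma \<gamma> X n u w / real n" using U_nonneg[of u w] by simp
  then show "Dg X u w \<le> q u"
    using D_Z[of u w] D_nZ[of u w] q0[OF u] by (cases "Zn X n u w") auto
qed

lemma QQ_lam: "QQ = \<gamma> (n+1) * lam A p"
  unfolding QQ_def q_def lam_def by (simp add: sum_distrib_left)

lemma lam0: "0 \<le> lam A p" unfolding lam_def using p0 by (intro sum_nonneg) auto

lemma QQ_le_lam: "QQ \<le> lam A p"
  unfolding QQ_lam using gle1[of "n+1"] lam0 mult_right_mono[of "\<gamma> (n+1)" 1 "lam A p"] by simp

lemma main:
  assumes d: "0 < \<delta>" "\<delta> < 1"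
  shows "measure M {w \<in> space M.
            - beta A p \<gamma> \<delta> n - lam A p / real n \<le> Rn A p \<gamma> X n w - Rhat A \<gamma> X n w
            \<and> Rn A p \<gamma> X n w - Rhat A \<gamma> X n w \<le> beta A p \<gamma> \<delta> n} \<ge> 1 - \<delta>"
proof -
  define L where "L = ln (4 / \<delta>)"
  define N where "N = real n"
  define r where "r = sqrt (\<gamma> (n+1) * lam A p * L / N)"
  define b where "b = beta A p \<gamma> \<delta> n"
  define la where "la = lam A p"
  have Npos: "0 < N" using n1 by (simp add: N_def)
  have Lpos: "0 < L" unfolding L_def using d by simp
  have eL: "exp (- L) = \<delta> / 4" unfolding L_def using d by (simp add: exp_minus)
  have r0: "0 \<le> r" unfolding r_def using gpos[of "n+1"] lam0 Lpos Npos by simp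
  have r2: "r^2 = QQ * L / N" unfolding r_def QQ_lam using gpos[of "n+1"] lam0 Lpos Npos by simp
  have bdef: "b = (1 + sqrt 2) * r + L / (3 * N)" unfolding b_def beta_def r_def L_def N_def by simp
  have sq: "sqrt (2 * (2 * QQ / real n) * L) = 2 * r"
  proof -
    have "2 * (2 * QQ / real n) * L = 4 * (\<gamma> (n+1) * lam A p * L / N)"
      unfolding QQ_lam N_def by simp
    then show ?thesis unfolding r_def by (simp add: real_sqrt_mult real_sqrt_divide)
  qed
  have bpos: "0 < b" unfolding bdef using r0 Lpos Npos by (simp add: add_nonneg_pos)
  have s2: "2 * r \<le> (1 + sqrt 2) * r" using r0 by (intro mult_right_mono) auto
  have evS: "\<And>P. Measurable.pred M P \<Longrightarrow> {w\<in>space M. P w} \<in> events" by measurable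
  note [measurable] = meas_SS
  define G where "G = {w\<in>space M. - b - la / N \<le> SS w \<and> SS w \<le> b}"
  define B1 where "B1 = {w\<in>space M. b < SS w}"
  define B2 where "B2 = {w\<in>space M. SS w < - b - la / N}"
  have Gev: "G \<in> events" unfolding G_def by measurable
  have B1ev: "B1 \<in> events" unfolding B1_def by measurable
  have B2ev: "B2 \<in> events" unfolding B2_def by measurable
  have "space M - G = B1 \<union> B2" unfolding G_def B1_def B2_def by auto
  then have "prob (space M - G) \<le> prob B1 + prob B2"
    using measure_Un_le[OF B1ev B2ev] by simp
  then have pG: "prob G \<ge> 1 - prob B1 - prob B2" using prob_compl[OF Gev] by simp
  have p1: "prob B1 \<le> \<delta> / 4"
  proof (cases "QQ \<le> b")
    case True
    then have "B1 = {}" unfolding B1_def using SS_le by (smt (verit) Collect_empty_eq)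
    then show ?thesis using d by simp
  next
    case False
    then have Qpos: "0 < QQ" using bpos by simp
    have thr: "2 * r + L / N \<le> b"
      unfolding bdef by (rule up_case[OF r0 Lpos Npos r2]) (use False bdef in simp)
    have "B1 \<subseteq> {w\<in>space M. MU + sqrt (2 * (2 * QQ / real n) * L) + (1 / real n) * L \<le> SS w}"
      unfolding B1_def sq using thr MU_le0 by (auto simp: N_def)
    then have "prob B1 \<le> prob {w\<in>space M. MU + sqrt (2 * (2 * QQ / real n) * L) + (1 / real n) * L \<le> SS w}"
      by (intro finite_measure_mono) measurable
    also have "\<dots> \<le> exp (- L)" by (rule tail_up[OF Qpos]) (use Lpos in simp)
    finally show ?thesis using eL by simp
  qed
  have MUQ: "- MU \<le> la / N"
  proof -
    have "- MU \<le> QQ / N" using MU_ge by (simp add: N_def)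
    also have "\<dots> \<le> la / N" using QQ_le_lam Npos by (simp add: la_def divide_right_mono)
    finally show ?thesis .
  qed
  have p2: "prob B2 \<le> \<delta> / 4"
  proof (cases "QQ = 0")
    case False
    then have Qpos: "0 < QQ" using QQ0 by simp
    have "B2 \<subseteq> {w\<in>space M. - MU + sqrt (2 * (2 * QQ / real n) * L) + (1 / (3 * real n)) * L \<le> - SS w}"
      unfolding B2_def sq using MUQ s2 by (auto simp: N_def bdef)
    then have "prob B2 \<le> prob {w\<in>space M. - MU + sqrt (2 * (2 * QQ / real n) * L) + (1 / (3 * real n)) * L \<le> - SS w}"
      by (intro finite_measure_mono) measurable
    also have "\<dots> \<le> exp (- L)" by (rule tail_lo[OF Qpos]) (use Lpos in simp)
    finally show ?thesis using eL by simp
  next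
    case True
    then have q0': "\<And>u. u \<in> A \<Longrightarrow> q u = 0" unfolding QQ_def using q0 finA
      by (simp add: sum_nonneg_eq_0_iff)
    have iS: "integrable M (\<lambda>w. - SS w)"
      unfolding SS_def using int_D by (intro integrable_minus Bochner_Integration.integrable_sum) auto
    have ES: "(\<integral>w. - SS w \<partial>M) = - MU"
      unfolding SS_def MU_def using int_D by (simp add: Bochner_Integration.integral_sum)
    have nn: "0 \<le> - SS w" for w
    proof -
      have "SS w \<le> 0" unfolding SS_def
      proof (intro sum_nonpos)
        fix u assume u: "u \<in> A"
        have "0 \<le> Ugamma \<gamma> X n u w / real n" using U_nonneg[of u w] by simp
        then show "Dg X u w \<le> 0"
          using D_Z[of u w] D_nZ[of u w] q0'[OF u] by (cases "Zn X n u w") auto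
      qed
      then show ?thesis by simp
    qed
    have "0 \<le> la / N" using lam0 Npos by (simp add: la_def)
    then have "B2 \<subseteq> {w\<in>space M. b \<le> - SS w}" unfolding B2_def by auto
    then have "prob B2 \<le> prob {w\<in>space M. b \<le> - SS w}"
      by (intro finite_measure_mono) measurable
    also have "\<dots> \<le> (\<integral>w. - SS w \<partial>M) / b"
      by (rule integral_Markov_inequality_measure[OF iS, where A="space M"]) (use nn bpos in auto)
    also have "\<dots> \<le> 0" using ES MU_ge True bpos by (simp add: divide_nonpos_pos)
    finally show ?thesis using d by simp
  qed
  have "G = {w \<in> space M.
            - beta A p \<gamma> \<delta> n - lam A p / real n \<le> Rn A p \<gamma> X n w - Rhat A \<gamma> X n w
            \<and> Rn A p \<gamma> X n w - Rhat A \<gamma> X n w \<le> beta A p \<gamma> \<delta> n}"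
    unfolding G_def Rn_Rhat b_def la_def N_def by simp
  moreover have "1 - \<delta> \<le> prob G" using pG p1 p2 d by linarith
  ultimately show ?thesis by simp
qed

end

theorem theorem3:
  fixes M :: "'w measure" and A :: "'a set" and p :: "'a \<Rightarrow> real"
    and \<gamma> :: "nat \<Rightarrow> real" and X :: "nat \<Rightarrow> 'a \<Rightarrow> 'w \<Rightarrow> bool"
    and \<delta> :: real and n :: nat
  assumes "prob_space M"
    and "finite A"
    and "\<forall>u\<in>A. 0 \<le> p u \<and> p u \<le> 1"
    and "\<forall>i\<ge>1. 0 < \<gamma> i \<and> \<gamma> i \<le> 1"
    and "\<forall>i j. 1 \<le> i \<longrightarrow> i \<le> j \<longrightarrow> \<gamma> j \<le> \<gamma> i"
    and "prob_space.indep_vars M (\<lambda>_. count_space UNIV) (\<lambda>(i, u). X i u) ({1..} \<times> A)"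
    and "\<forall>i\<ge>1. \<forall>u\<in>A. distr M (count_space UNIV) (X i u) = measure_pmf (bernoulli_pmf (\<gamma> i * p u))"
    and "0 < \<delta>" and "\<delta> < 1"
    and "1 \<le> n"
  shows "measure M {w \<in> space M.
            - beta A p \<gamma> \<delta> n - lam A p / real n \<le> Rn A p \<gamma> X n w - Rhat A \<gamma> X n w
            \<and> Rn A p \<gamma> X n w - Rhat A \<gamma> X n w \<le> beta A p \<gamma> \<delta> n} \<ge> 1 - \<delta>"
proof -
  interpret fat M A p \<gamma> X n
    using assms by (simp add: fat_def fat_axioms_def)
  show ?thesis by (rule main) (use assms in auto)
qed

end
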